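(* Let $M$ be an $n\times n$ Hermitian positive semidefinite matrix which is irreducible. If the argument of each non-zero off-diagonal entry of $-M$ lies in $\left(-\frac{\pi}{2^n},\frac{\pi}{2^n}\right)$, then $\operatorname{rank}(M)\ge n-1$.
   Context: A square matrix is irreducible if it cannot be brought into block-diagonal form (with at least two diagonal blocks) by a simultaneous permutation of its rows and columns. *)

theory Defs
  imports "HOL-Analysis.Analysis"
begin

definition hermitian_mat :: "complex^'n^'n \<Rightarrow> bool" where
  "hermitian_mat M \<longleftrightarrow> (\<forall>i j. M $ i $ j = cnj (M $ j $ i))"

definition psd_mat :: "complex^'n^'n \<Rightarrow> bool" where
  "psd_mat M \<longleftrightarrow> hermitian_mat M \<and>
     (\<forall>x :: complex^'n. (\<Sum>i\<in>UNIV. \<Sum>j\<in>UNIV. cnj (x $ i) * M $ i $ j * x $ j) \<in> \<real> \<and>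
                       0 \<le> Re (\<Sum>i\<in>UNIV. \<Sum>j\<in>UNIV. cnj (x $ i) * M $ i $ j * x $ j))"

text \<open>A matrix is reducible if some simultaneous permutation of rows and columns
  (an enumeration tau of the index set by positions 0..n-1) brings it into
  block-diagonal form with m >= 2 diagonal blocks: blk assigns to each position
  its block number, monotonically, using all blocks 0..m-1, and all entries
  between positions in different blocks vanish.\<close>
definition reducible_mat :: "'a::zero^'n^'n \<Rightarrow> bool" where
  "reducible_mat M \<longleftrightarrow>
     (\<exists>(tau :: nat \<Rightarrow> 'n) (blk :: nat \<Rightarrow> nat) (m :: nat).
        bij_betw tau {0..<CARD('n)} UNIV \<and> 2 \<le> m \<and>
        (\<forall>p q. p \<le> q \<and> q < CARD('n) \<longrightarrow> blk p \<le> blk q) \<and>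
        blk ` {0..<CARD('n)} = {0..<m} \<and>
        (\<forall>p q. p < CARD('n) \<and> q < CARD('n) \<and> blk p \<noteq> blk q \<longrightarrow> M $ tau p $ tau q = 0))"

definition irreducible_mat :: "'a::zero^'n^'n \<Rightarrow> bool" where
  "irreducible_mat M \<longleftrightarrow> \<not> reducible_mat M"

end

theory Submission
  imports Defs
begin


definition good :: "real \<Rightarrow> complex \<Rightarrow> bool" where
  "good t z \<longleftrightarrow> z = 0 \<or> (-t < Arg z \<and> Arg z < t)"

lemma good_char:
  assumes "0 < t" "t \<le> pi/2" "z \<noteq> 0"
  shows "(-t < Arg z \<and> Arg z < t) \<longleftrightarrow> (Im (z * cis t) > 0 \<and> Im (z * cis (-t)) < 0)"
proof -
  define r where "r = cmod z"
  define th where "th = Arg z"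
  have r: "r > 0" using assms by (simp add: r_def)
  have z: "z = rcis r th" unfolding r_def th_def by (simp add: rcis_cmod_Arg)
  have b: "-pi < th" "th \<le> pi" using Arg_bounded th_def by auto
  have i1: "Im (z * cis t) = r * sin (th + t)" unfolding z
    by (simp add: rcis_def cis_mult sin_add algebra_simps)
  have i2: "Im (z * cis (-t)) = r * sin (th - t)" unfolding z
    by (simp add: rcis_def cis_mult sin_diff algebra_simps)
  show ?thesis unfolding i1 i2 th_def[symmetric]
  proof
    assume h: "-t < th \<and> th < t"
    have "sin (th + t) > 0" by (rule sin_gt_zero) (use h assms in auto)
    moreover have "sin (t - th) > 0" by (rule sin_gt_zero) (use h assms b in auto)
    hence "sin (th - t) < 0" by (metis minus_diff_eq neg_less_0_iff_less sin_minus)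
    ultimately show "0 < r * sin (th + t) \<and> r * sin (th - t) < 0"
      using r by (simp add: mult_pos_pos mult_pos_neg)
  next
    assume h: "0 < r * sin (th + t) \<and> r * sin (th - t) < 0"
    hence s1: "sin (th + t) > 0" and s2: "sin (th - t) < 0" using r
      by (auto simp: zero_less_mult_iff mult_less_0_iff)
    have "-t < th"
    proof (rule ccontr)
      assume "\<not> -t < th"
      hence "0 \<le> -(th + t)" "-(th+t) \<le> pi" using b assms by auto
      hence "0 \<le> sin (-(th+t))" by (rule sin_ge_zero)
      thus False using s1 by (simp only: sin_minus)
    qed
    moreover have "th < t"
    proof (rule ccontr)
      assume "\<not> th < t"
      hence "0 \<le> th - t" "th - t \<le> pi" using b assms by auto
      hence "0 \<le> sin (th - t)" by (rule sin_ge_zero)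
      thus False using s2 by simp
    qed
    ultimately show "-t < th \<and> th < t" by simp
  qed
qed

lemma good_add:
  assumes "0 < t" "t \<le> pi/2" "good t z" "good t w"
  shows "good t (z + w)" and "z + w = 0 \<Longrightarrow> z = 0 \<and> w = 0"
proof -
  have key: "z + w \<noteq> 0 \<and> (-t < Arg (z+w) \<and> Arg (z+w) < t)" if "z \<noteq> 0"
  proof -
    have a: "Im (z * cis t) > 0 \<and> Im (z * cis (-t)) < 0"
      using good_char[OF assms(1,2) that] assms(3) that by (simp add: good_def)
    have b: "Im (w * cis t) \<ge> 0 \<and> Im (w * cis (-t)) \<le> 0"
    proof (cases "w = 0")
      case False thus ?thesis
        using good_char[OF assms(1,2) False] assms(4) by (simp add: good_def)
    qed simp
    have c: "Im ((z+w) * cis t) > 0 \<and> Im ((z+w) * cis (-t)) < 0"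
      using a b by (simp add: distrib_right del: cis.sel)
    have nz: "z + w \<noteq> 0" using c by (metis Im_complex_of_real mult_zero_left of_real_0 order.irrefl)
    show ?thesis using good_char[OF assms(1,2) nz] c nz by simp
  qed
  have key2: "z + w \<noteq> 0 \<and> (-t < Arg (z+w) \<and> Arg (z+w) < t)" if "w \<noteq> 0"
  proof -
    have a: "Im (w * cis t) > 0 \<and> Im (w * cis (-t)) < 0"
      using good_char[OF assms(1,2) that] assms(4) that by (simp add: good_def)
    have b: "Im (z * cis t) \<ge> 0 \<and> Im (z * cis (-t)) \<le> 0"
    proof (cases "z = 0")
      case False thus ?thesis
        using good_char[OF assms(1,2) False] assms(3) by (simp add: good_def)
    qed simp
    have c: "Im ((z+w) * cis t) > 0 \<and> Im ((z+w) * cis (-t)) < 0"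
      using a b by (simp add: distrib_right del: cis.sel)
    have nz: "z + w \<noteq> 0" using c by (metis Im_complex_of_real mult_zero_left of_real_0 order.irrefl)
    show ?thesis using good_char[OF assms(1,2) nz] c nz by simp
  qed
  show "good t (z + w)" using key key2 unfolding good_def
    by (cases "z = 0"; cases "w = 0") auto
  show "z + w = 0 \<Longrightarrow> z = 0 \<and> w = 0" using key key2 by auto
qed

lemma good_mult:
  assumes "0 < t" "t \<le> pi/2" "good t z" "good t w"
  shows "good (2*t) (z * w)"
proof (cases "z = 0 \<or> w = 0")
  case True thus ?thesis by (auto simp: good_def)
next
  case False
  hence h: "-t < Arg z" "Arg z < t" "-t < Arg w" "Arg w < t" using assms by (auto simp: good_def)
  have "Arg (z * w) = Arg z + Arg w"
    by (rule Arg_times) (use h assms False in auto)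
  thus ?thesis using h by (simp add: good_def)
qed

lemma good_div:
  assumes "good t z" "r > 0"
  shows "good t (z / of_real r)"
  using assms by (auto simp: good_def)

lemma good_mono:
  assumes "good t z" "t \<le> t'"
  shows "good t' z"
  using assms by (auto simp: good_def)



definition herm :: "'a set \<Rightarrow> ('a \<Rightarrow> 'a \<Rightarrow> complex) \<Rightarrow> bool" where
  "herm I M \<longleftrightarrow> (\<forall>i\<in>I. \<forall>j\<in>I. M i j = cnj (M j i))"
definition qf :: "'a set \<Rightarrow> ('a \<Rightarrow> 'a \<Rightarrow> complex) \<Rightarrow> ('a \<Rightarrow> complex) \<Rightarrow> complex" where
  "qf I M x = (\<Sum>i\<in>I. \<Sum>j\<in>I. cnj (x i) * M i j * x j)"
definition psdr :: "'a set \<Rightarrow> ('a \<Rightarrow> 'a \<Rightarrow> complex) \<Rightarrow> bool" where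
  "psdr I M \<longleftrightarrow> herm I M \<and> (\<forall>x. 0 \<le> Re (qf I M x))"
definition conn :: "'a set \<Rightarrow> ('a \<Rightarrow> 'a \<Rightarrow> complex) \<Rightarrow> bool" where
  "conn I M \<longleftrightarrow> (\<forall>S. S \<subseteq> I \<longrightarrow> S \<noteq> {} \<longrightarrow> S \<noteq> I \<longrightarrow> (\<exists>i\<in>S. \<exists>j\<in>I-S. M i j \<noteq> 0))"
definition angc :: "real \<Rightarrow> 'a set \<Rightarrow> ('a \<Rightarrow> 'a \<Rightarrow> complex) \<Rightarrow> bool" where
  "angc t I M \<longleftrightarrow> (\<forall>i\<in>I. \<forall>j\<in>I. i \<noteq> j \<longrightarrow> good t (- M i j))"
definition kerv :: "'a set \<Rightarrow> ('a \<Rightarrow> 'a \<Rightarrow> complex) \<Rightarrow> ('a \<Rightarrow> complex) \<Rightarrow> bool" where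
  "kerv I M x \<longleftrightarrow> (\<forall>i\<in>I. (\<Sum>j\<in>I. M i j * x j) = 0)"

lemma sum_two:
  assumes "finite I" "k \<in> I" "j \<in> I" "k \<noteq> j"
  fixes g :: "'a \<Rightarrow> complex"
  shows "(\<Sum>i\<in>I. g i * (if i = k then 1 else if i = j then s else 0)) = g k + s * g j"
proof -
  have "(\<Sum>i\<in>I. g i * (if i = k then 1 else if i = j then s else 0))
      = (\<Sum>i\<in>I. (if i = k then g k else 0) + (if i = j then s * g j else 0))"
    by (rule sum.cong) (use assms in auto)
  also have "\<dots> = g k + s * g j" using assms by (simp add: sum.distrib)
  finally show ?thesis .
qed

lemma sum_two':
  assumes "finite I" "k \<in> I" "j \<in> I" "k \<noteq> j"
  fixes g :: "'a \<Rightarrow> complex"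
  shows "(\<Sum>i\<in>I. cnj (if i = k then 1 else if i = j then s else 0) * g i) = g k + cnj s * g j"
proof -
  have "(\<Sum>i\<in>I. cnj (if i = k then 1 else if i = j then s else 0) * g i)
      = (\<Sum>i\<in>I. (if i = k then g k else 0) + (if i = j then cnj s * g j else 0))"
    by (rule sum.cong) (use assms in auto)
  also have "\<dots> = g k + cnj s * g j" using assms by (simp add: sum.distrib)
  finally show ?thesis .
qed

lemma good_Re_pos:
  assumes "good t z" "z \<noteq> 0" "0 < t" "t \<le> pi/2"
  shows "Re z > 0"
proof -
  have h: "-t < Arg z" "Arg z < t" using assms by (auto simp: good_def)
  have "cos (Arg z) > 0" by (rule cos_gt_zero_pi) (use h assms in auto)
  thus ?thesis using cos_Arg[OF assms(2)] assms(2)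
    by (simp add: divide_pos_pos zero_less_divide_iff)
qed

lemma diag_pos:
  assumes "finite I" "psdr I M" "angc t I M" "0 < t" "t \<le> pi/2"
    "k \<in> I" "j \<in> I" "j \<noteq> k" "M k j \<noteq> 0"
  shows "M k k = of_real (Re (M k k)) \<and> Re (M k k) > 0"
proof -
  have H: "herm I M" and P: "\<And>x. 0 \<le> Re (qf I M x)" using assms(2) by (auto simp: psdr_def)
  have im: "Im (M k k) = 0" using H assms(6) unfolding herm_def
    by (metis cnj.sel(2) neg_equal_zero)
  hence real: "M k k = of_real (Re (M k k))" by (simp add: complex_eq_iff)
  have jk: "M j k = cnj (M k j)" using H assms(6,7) unfolding herm_def by blast
  define a where "a = Re (M k j)"
  have "Re (- M k j) > 0"
    by (rule good_Re_pos) (use assms in \<open>auto simp: angc_def\<close>)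
  hence a: "a < 0" by (simp add: a_def)
  define b where "b = Re (M j j)"
  define s :: real where "s = -a / (\<bar>b\<bar> + 1)"
  have s: "s > 0" using a by (simp add: s_def divide_neg_pos add_pos_nonneg)
  have sb: "s * b < -a"
  proof -
    have "s * b \<le> s * \<bar>b\<bar>" using s by (simp add: mult_left_mono)
    also have "\<dots> < s * (\<bar>b\<bar> + 1)" using s by simp
    also have "\<dots> = -a" by (simp add: s_def)
    finally show ?thesis .
  qed
  define x where "x = (\<lambda>i. if i = k then 1 else if i = j then complex_of_real s else 0)"
  have "qf I M x = (\<Sum>i\<in>I. cnj (x i) * (\<Sum>l\<in>I. M i l * x l))"
    unfolding qf_def by (simp add: sum_distrib_left mult.assoc)
  also have "\<dots> = (\<Sum>i\<in>I. cnj (x i) * (M i k + s * M i j))"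
    unfolding x_def by (subst sum_two) (use assms in auto)
  also have "\<dots> = (M k k + s * M k j) + s * (M j k + s * M j j)"
    unfolding x_def by (subst sum_two') (use assms in auto)
  finally have q: "Re (qf I M x) = Re (M k k) + 2 * s * a + s * s * b"
    using jk by (simp add: a_def b_def algebra_simps)
  have "Re (M k k) \<ge> s * (-2*a - s * b)" using P[of x] q by (simp add: algebra_simps)
  moreover have "s * (-2*a - s * b) > 0" using s sb a by (simp add: mult_pos_pos)
  ultimately show ?thesis using real by simp
qed



definition schur :: "('a \<Rightarrow> 'a \<Rightarrow> complex) \<Rightarrow> 'a \<Rightarrow> 'a \<Rightarrow> 'a \<Rightarrow> complex" where
  "schur M k = (\<lambda>i j. M i j - M i k * M k j / M k k)"

lemma row_split:
  assumes "finite I" "k \<in> I"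
  shows "(\<Sum>j\<in>I. M i j * x j) = M i k * x k + (\<Sum>j\<in>I-{k}. M i j * x j)"
proof -
  have "I = insert k (I - {k})" using assms by auto
  hence "(\<Sum>j\<in>I. M i j * x j) = (\<Sum>j\<in>insert k (I-{k}). M i j * x j)" by simp
  also have "\<dots> = M i k * x k + (\<Sum>j\<in>I-{k}. M i j * x j)" using assms by (subst sum.insert) auto
  finally show ?thesis .
qed

lemma schur_row:
  "(\<Sum>j\<in>J. schur M k i j * y j) = (\<Sum>j\<in>J. M i j * y j) - M i k * (\<Sum>j\<in>J. M k j * y j) / M k k"
  unfolding schur_def by (simp add: sum_subtractf sum_distrib_left sum_divide_distrib algebra_simps)

lemma qf_schur:
  assumes "finite I" "k \<in> I" "M k k \<noteq> 0"
    and x: "x = y(k := -(\<Sum>j\<in>I-{k}. M k j * y j) / M k k)"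
  shows "qf I M x = qf (I-{k}) (schur M k) y"
proof -
  define s where "s = (\<Sum>j\<in>I-{k}. M k j * y j)"
  define xk where "xk = -s / M k k"
  have xk: "x k = xk" using x by (simp add: xk_def s_def)
  have xy: "\<And>j. j \<in> I-{k} \<Longrightarrow> x j = y j" using x by auto
  have rs: "(\<Sum>j\<in>I. M i j * x j) = M i k * xk + (\<Sum>j\<in>I-{k}. M i j * y j)" for i
  proof -
    have "(\<Sum>j\<in>I-{k}. M i j * x j) = (\<Sum>j\<in>I-{k}. M i j * y j)"
      by (rule sum.cong) (auto simp: xy)
    thus ?thesis using row_split[OF assms(1,2), of M i x] xk by simp
  qed
  have "qf I M x = (\<Sum>i\<in>I. cnj (x i) * (\<Sum>j\<in>I. M i j * x j))"
    unfolding qf_def by (simp add: sum_distrib_left mult.assoc)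
  also have "\<dots> = cnj (x k) * (\<Sum>j\<in>I. M k j * x j) + (\<Sum>i\<in>I-{k}. cnj (x i) * (\<Sum>j\<in>I. M i j * x j))"
    by (rule row_split[OF assms(1,2), of "\<lambda>_ i. cnj (x i)" _ "\<lambda>i. \<Sum>j\<in>I. M i j * x j"])
  also have "cnj (x k) * (\<Sum>j\<in>I. M k j * x j) = 0"
    using rs[of k] assms(3) by (simp add: xk_def s_def)
  also have "(\<Sum>i\<in>I-{k}. cnj (x i) * (\<Sum>j\<in>I. M i j * x j))
     = (\<Sum>i\<in>I-{k}. cnj (y i) * (\<Sum>j\<in>I-{k}. schur M k i j * y j))"
  proof (rule sum.cong)
    fix i assume "i \<in> I - {k}"
    thus "cnj (x i) * (\<Sum>j\<in>I. M i j * x j) = cnj (y i) * (\<Sum>j\<in>I-{k}. schur M k i j * y j)"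
      using xy rs[of i] by (simp add: schur_row s_def xk_def)
  qed simp
  also have "\<dots> = qf (I-{k}) (schur M k) y"
    unfolding qf_def by (simp add: sum_distrib_left mult.assoc)
  finally show ?thesis by simp
qed

lemma ker_schur:
  assumes "finite I" "k \<in> I" "M k k \<noteq> 0" "kerv I M x"
  shows "x k = -(\<Sum>j\<in>I-{k}. M k j * x j) / M k k" and "kerv (I-{k}) (schur M k) x"
proof -
  have r: "M i k * x k + (\<Sum>j\<in>I-{k}. M i j * x j) = 0" if "i \<in> I" for i
    using assms(4) that row_split[OF assms(1,2), of M i x] by (simp add: kerv_def)
  show xk: "x k = -(\<Sum>j\<in>I-{k}. M k j * x j) / M k k"
    using r[OF assms(2)] assms(3) by (simp add: field_simps add_eq_0_iff)
  show "kerv (I-{k}) (schur M k) x"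
    unfolding kerv_def
  proof
    fix i assume "i \<in> I - {k}"
    thus "(\<Sum>j\<in>I - {k}. schur M k i j * x j) = 0"
      using r[of i] xk by (simp add: schur_row)
  qed
qed



lemma herm_schur:
  assumes "herm I M" "k \<in> I" "cnj (M k k) = M k k"
  shows "herm (I-{k}) (schur M k)"
  unfolding herm_def
proof (intro ballI)
  fix i j assume i: "i \<in> I - {k}" and j: "j \<in> I - {k}"
  have e1: "cnj (M j i) = M i j" "cnj (M j k) = M k j" "cnj (M k i) = M i k"
    using assms(1,2) i j unfolding herm_def by (metis complex_cnj_cnj DiffD1)+
  have "cnj (schur M k j i) = cnj (M j i) - cnj (M j k) * cnj (M k i) / cnj (M k k)"
    unfolding schur_def by simp
  also have "\<dots> = schur M k i j" unfolding e1 assms(3) schur_def by (simp add: mult.commute)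
  finally show "schur M k i j = cnj (schur M k j i)" by simp
qed

lemma neg_schur: "- schur M k i j = - M i j + (- M i k) * (- M k j) / M k k"
  by (simp add: schur_def)

lemma angc_schur:
  assumes "angc t I M" "0 < t" "2*t \<le> pi/2" "k \<in> I" "M k k = of_real d" "d > 0"
  shows "angc (2*t) (I-{k}) (schur M k)"
  and "\<And>i j. i \<in> I-{k} \<Longrightarrow> j \<in> I-{k} \<Longrightarrow> i \<noteq> j \<Longrightarrow> schur M k i j = 0 \<Longrightarrow>
          M i j = 0 \<and> M i k * M k j = 0"
proof -
  have G: "good (2*t) (- M i j) \<and> good (2*t) ((- M i k) * (- M k j) / M k k)"
    if "i \<in> I-{k}" "j \<in> I-{k}" "i \<noteq> j" for i j
  proof -
    have "good t (- M i j)" "good t (- M i k)" "good t (- M k j)"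
      using assms(1,4) that unfolding angc_def by auto
    note g = this
    have t2: "t \<le> pi/2" using assms by simp
    have "good (2*t) ((- M i k) * (- M k j))" by (rule good_mult[OF assms(2) t2 g(2,3)])
    hence "good (2*t) ((- M i k) * (- M k j) / of_real d)" by (rule good_div) (rule assms(6))
    moreover have "good (2*t) (- M i j)" by (rule good_mono[OF g(1)]) (use assms in simp)
    ultimately show ?thesis using assms(5) by simp
  qed
  have p: "0 < 2*t" using assms by simp
  show "angc (2*t) (I-{k}) (schur M k)"
    unfolding angc_def neg_schur using G good_add(1)[OF p assms(3)] by blast
  fix i j assume h: "i \<in> I-{k}" "j \<in> I-{k}" "i \<noteq> j" "schur M k i j = 0"
  have "- M i j + (- M i k) * (- M k j) / M k k = 0" using h(4) neg_schur[of M k i j] by simp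
  hence "- M i j = 0 \<and> (- M i k) * (- M k j) / M k k = 0"
    using good_add(2)[OF p assms(3)] G[OF h(1-3)] by blast
  thus "M i j = 0 \<and> M i k * M k j = 0" using assms(5,6) by auto
qed

lemma conn_schur:
  assumes "conn I M" "k \<in> I"
    and Z: "\<And>i j. i \<in> I-{k} \<Longrightarrow> j \<in> I-{k} \<Longrightarrow> i \<noteq> j \<Longrightarrow> schur M k i j = 0 \<Longrightarrow>
          M i j = 0 \<and> M i k * M k j = 0"
  shows "conn (I-{k}) (schur M k)"
  unfolding conn_def
proof (intro allI impI)
  fix S assume S: "S \<subseteq> I-{k}" "S \<noteq> {}" "S \<noteq> I-{k}"
  have S1: "S \<subseteq> I" "S \<noteq> I" using S assms(2) by auto
  have "\<exists>i\<in>S. \<exists>j\<in>I-S. M i j \<noteq> 0"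
    using assms(1) S1 S(2) unfolding conn_def by simp
  then obtain i j where ij: "i \<in> S" "j \<in> I - S" "M i j \<noteq> 0" by blast
  show "\<exists>i\<in>S. \<exists>j\<in>I - {k} - S. schur M k i j \<noteq> 0"
  proof (cases "j = k")
    case False
    have "i \<in> I-{k}" "j \<in> I-{k}" "i \<noteq> j" using ij S False by auto
    hence "schur M k i j \<noteq> 0" using Z[of i j] ij(3) by blast
    thus ?thesis using ij False by blast
  next
    case True
    have T: "S \<union> {k} \<subseteq> I" "S \<union> {k} \<noteq> {}" "S \<union> {k} \<noteq> I" using S assms(2) by auto
    have "\<exists>i\<in>S \<union> {k}. \<exists>j\<in>I-(S \<union> {k}). M i j \<noteq> 0"
      using assms(1) T unfolding conn_def by (metis (no_types, lifting))
    then obtain i' j' where ij': "i' \<in> S \<union> {k}" "j' \<in> I - (S \<union> {k})" "M i' j' \<noteq> 0"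
      by blast
    have j'': "j' \<in> I - {k} - S" using ij' by auto
    show ?thesis
    proof (cases "i' = k")
      case False
      have "i' \<in> I-{k}" "j' \<in> I-{k}" "i' \<noteq> j'" "i' \<in> S" using ij' S False by auto
      hence "schur M k i' j' \<noteq> 0" using Z[of i' j'] ij'(3) by blast
      thus ?thesis using j'' \<open>i' \<in> S\<close> by blast
    next
      case True
      have "M i k * M k j' \<noteq> 0" using ij ij' \<open>j = k\<close> True by simp
      moreover have "i \<in> I-{k}" "j' \<in> I-{k}" "i \<noteq> j'" using ij ij' S by auto
      ultimately have "schur M k i j' \<noteq> 0" using Z[of i j'] by blast
      thus ?thesis using j'' ij(1) by blast
    qed
  qed
qed



lemma main_ind:
  "\<forall>I (M :: 'a \<Rightarrow> 'a \<Rightarrow> complex) x y. finite I \<and> card I = c \<and> psdr I M \<and> conn I M \<and>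
     angc (pi / 2 ^ c) I M \<and> kerv I M x \<and> kerv I M y \<longrightarrow>
     (\<exists>a b. (a \<noteq> 0 \<or> b \<noteq> 0) \<and> (\<forall>i\<in>I. a * x i + b * y i = 0))"
proof (induction c)
  case 0
  show ?case
  proof (intro allI impI)
    fix I and M :: "'a \<Rightarrow> 'a \<Rightarrow> complex" and x y
    assume "finite I \<and> card I = 0 \<and> psdr I M \<and> conn I M \<and> angc (pi / 2 ^ 0) I M \<and> kerv I M x \<and> kerv I M y"
    hence "I = {}" by auto
    thus "\<exists>a b. (a \<noteq> 0 \<or> b \<noteq> 0) \<and> (\<forall>i\<in>I. a * x i + b * y i = 0)"
      by (intro exI[of _ 1]) auto
  qed
next
  case (Suc c)
  show ?case
  proof (intro allI impI)
    fix I and M :: "'a \<Rightarrow> 'a \<Rightarrow> complex" and x y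
    assume A: "finite I \<and> card I = Suc c \<and> psdr I M \<and> conn I M \<and> angc (pi / 2 ^ Suc c) I M \<and> kerv I M x \<and> kerv I M y"
    hence fin: "finite I" and cI: "card I = Suc c" and P: "psdr I M" and C: "conn I M"
      and An: "angc (pi / 2 ^ Suc c) I M" and kx: "kerv I M x" and ky: "kerv I M y" by auto
    obtain k where k: "k \<in> I" using cI by (metis card.empty ex_in_conv nat.distinct(1))
    show "\<exists>a b. (a \<noteq> 0 \<or> b \<noteq> 0) \<and> (\<forall>i\<in>I. a * x i + b * y i = 0)"
    proof (cases "c = 0")
      case True
      hence I: "I = {k}" using cI k by (metis One_nat_def card_1_singletonE singletonD)
      show ?thesis
      proof (cases "x k = 0 \<and> y k = 0")
        case True thus ?thesis using I by (intro exI[of _ 1] exI[of _ 0]) auto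
      next
        case False thus ?thesis using I
          by (intro exI[of _ "y k"] exI[of _ "- x k"]) (auto simp: algebra_simps)
      qed
    next
      case False
      define t where "t = pi / 2 ^ Suc c"
      have t: "0 < t" "2 * t \<le> pi / 2" "t \<le> pi/2"
      proof -
        show "0 < t" by (simp add: t_def)
        have "(2::real) ^ 1 \<le> 2 ^ c" using False by (intro power_increasing) auto
        hence "2 * t \<le> pi / 2" unfolding t_def by (simp add: field_simps)
        thus "2 * t \<le> pi/2" .
        thus "t \<le> pi/2" using \<open>0 < t\<close> by simp
      qed
      have t2: "2 * t = pi / 2 ^ c" by (simp add: t_def)
      have "{k} \<subseteq> I" "{k} \<noteq> {}" "{k} \<noteq> I" using k cI False by auto
      then obtain j where j: "j \<in> I - {k}" "M k j \<noteq> 0" using C unfolding conn_def by blast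
      have dp: "M k k = of_real (Re (M k k)) \<and> Re (M k k) > 0"
        by (rule diag_pos[OF fin P An[folded t_def] t(1,3) k]) (use j in auto)
      define d where "d = Re (M k k)"
      have d: "M k k = of_real d" "d > 0" using dp by (auto simp: d_def)
      hence nz: "M k k \<noteq> 0" by simp
      have H: "herm I M" and PQ: "\<And>x. 0 \<le> Re (qf I M x)" using P by (auto simp: psdr_def)
      define I' where "I' = I - {k}"
      define M' where "M' = schur M k"
      have fin': "finite I'" and cI': "card I' = c" using fin cI k by (auto simp: I'_def)
      have H': "herm I' M'" unfolding I'_def M'_def
        by (rule herm_schur[OF H k]) (simp add: d)
      have P': "psdr I' M'"
        unfolding psdr_def
      proof (intro conjI allI H')
        fix yy :: "'a \<Rightarrow> complex"
        have "qf I M (yy(k := -(\<Sum>j\<in>I-{k}. M k j * yy j) / M k k)) = qf I' M' yy"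
          unfolding I'_def M'_def by (rule qf_schur[where M=M and k=k and I=I, OF fin k nz]) simp
        thus "0 \<le> Re (qf I' M' yy)" using PQ by metis
      qed
      have An': "angc (pi / 2 ^ c) I' M'" and Z: "\<And>i j. i \<in> I-{k} \<Longrightarrow> j \<in> I-{k} \<Longrightarrow> i \<noteq> j \<Longrightarrow> schur M k i j = 0 \<Longrightarrow>
          M i j = 0 \<and> M i k * M k j = 0"
        using angc_schur[OF An[folded t_def] t(1,2) k d] t2 unfolding I'_def M'_def by auto
      have C': "conn I' M'" unfolding I'_def M'_def by (rule conn_schur[OF C k Z])
      have kx': "kerv I' M' x" and xk: "x k = -(\<Sum>j\<in>I'. M k j * x j) / M k k"
        using ker_schur[OF fin k nz kx] unfolding I'_def M'_def by auto
      have ky': "kerv I' M' y" and yk: "y k = -(\<Sum>j\<in>I'. M k j * y j) / M k k"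
        using ker_schur[OF fin k nz ky] unfolding I'_def M'_def by auto
      obtain a b where ab: "a \<noteq> 0 \<or> b \<noteq> 0" "\<forall>i\<in>I'. a * x i + b * y i = 0"
        using Suc.IH fin' cI' P' C' An' kx' ky' by blast
      have "a * x k + b * y k = -(\<Sum>j\<in>I'. M k j * (a * x j + b * y j)) / M k k"
        unfolding xk yk by (simp add: field_simps sum_distrib_left sum.distrib nz)
      also have "\<dots> = 0" using ab(2) by simp
      finally have "a * x k + b * y k = 0" .
      hence "\<forall>i\<in>I. a * x i + b * y i = 0" using ab(2) unfolding I'_def by auto
      thus ?thesis using ab(1) by blast
    qed
  qed
qed



lemma irr_conn:
  fixes M :: "complex^'n^'n"
  assumes H: "hermitian_mat M" and IR: "irreducible_mat M"
  shows "conn UNIV (\<lambda>i j. M$i$j)"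
  unfolding conn_def
proof (intro allI impI, rule ccontr)
  fix S :: "'n set" assume S: "S \<subseteq> UNIV" "S \<noteq> {}" "S \<noteq> UNIV"
    and N: "\<not> (\<exists>i\<in>S. \<exists>j\<in>UNIV - S. M$i$j \<noteq> 0)"
  have Z: "M$i$j = 0" if "i \<in> S" "j \<notin> S" for i j using N that by blast
  have Z2: "M$i$j = 0" if "i \<notin> S" "j \<in> S" for i j
    using Z[OF that(2,1)] H unfolding hermitian_mat_def by (metis complex_cnj_zero)
  define n where "n = CARD('n)"
  define a where "a = card S"
  have a0: "0 < a" using S by (simp add: a_def card_gt_0_iff)
  have an: "a < n" unfolding a_def n_def using S by (metis finite psubsetI psubset_card_mono top_greatest)
  obtain f where f: "bij_betw f {0..<a} S"
    using finite_same_card_bij[of "{0..<a}" S] by (auto simp: a_def)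
  have "card (UNIV - S) = n - a" unfolding n_def a_def by (simp add: card_Diff_subset)
  then obtain g where g: "bij_betw g {a..<n} (UNIV - S)"
    using finite_same_card_bij[of "{a..<n}" "UNIV - S"] by auto
  define tau where "tau p = (if p < a then f p else g p)" for p
  have t1: "bij_betw tau {0..<a} S"
    using f by (rule bij_betw_cong[THEN iffD1, rotated]) (auto simp: tau_def)
  have t2: "bij_betw tau {a..<n} (UNIV - S)"
    using g by (rule bij_betw_cong[THEN iffD1, rotated]) (auto simp: tau_def)
  have "bij_betw tau ({0..<a} \<union> {a..<n}) (S \<union> (UNIV - S))"
    by (rule bij_betw_combine[OF t1 t2]) auto
  moreover have "{0..<a} \<union> {a..<n} = {0..<n}" using an by auto
  ultimately have tb: "bij_betw tau {0..<n} UNIV" by simp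
  have tS: "p < a \<Longrightarrow> tau p \<in> S" for p using t1 by (auto simp: bij_betw_def)
  have tN: "a \<le> p \<Longrightarrow> p < n \<Longrightarrow> tau p \<notin> S" for p using t2 by (auto simp: bij_betw_def)
  define blk where "blk p = (if p < a then 0 else 1::nat)" for p
  have img: "blk ` {0..<n} = {0..<2}"
  proof
    show "blk ` {0..<n} \<subseteq> {0..<2}" by (auto simp: blk_def)
    have "0 = blk 0" "0 \<in> {0..<n}" "1 = blk a" "a \<in> {0..<n}" using a0 an by (auto simp: blk_def)
    hence "0 \<in> blk ` {0..<n}" "1 \<in> blk ` {0..<n}" by blast+
    moreover have "{0..<2::nat} = {0, 1}" by auto
    ultimately show "{0..<2} \<subseteq> blk ` {0..<n}" by simp
  qed
  have "reducible_mat M"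
    unfolding reducible_mat_def
  proof (intro exI conjI allI impI)
    show "bij_betw tau {0..<CARD('n)} UNIV" using tb by (simp add: n_def)
    show "2 \<le> (2::nat)" by simp
    show "blk ` {0..<CARD('n)} = {0..<2}" using img by (simp add: n_def)
    fix p q
    show "p \<le> q \<and> q < CARD('n) \<Longrightarrow> blk p \<le> blk q" by (auto simp: blk_def)
    assume h: "p < CARD('n) \<and> q < CARD('n) \<and> blk p \<noteq> blk q"
    show "M $ tau p $ tau q = 0"
    proof (cases "p < a")
      case True
      hence "\<not> q < a" using h by (auto simp: blk_def)
      thus ?thesis using True h tS tN Z by (simp add: n_def)
    next
      case False
      hence "q < a" using h by (auto simp: blk_def split: if_splits)
      thus ?thesis using False h tS tN Z2 by (simp add: n_def)
    qed
  qed
  thus False using IR by (simp add: irreducible_mat_def)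
qed

lemma kerv_vec: "kerv UNIV (\<lambda>i j. M$i$j) (\<lambda>i. w$i) \<longleftrightarrow> M *v w = 0"
  by (simp add: kerv_def matrix_vector_mult_def vec_eq_iff)

theorem lemma5:
  fixes M :: "complex^'n^'n"
  assumes "psd_mat M"
    and "irreducible_mat M"
    and "\<And>i j. i \<noteq> j \<Longrightarrow> M $ i $ j \<noteq> 0 \<Longrightarrow>
           - pi / 2 ^ CARD('n) < Arg (- (M $ i $ j)) \<and> Arg (- (M $ i $ j)) < pi / 2 ^ CARD('n)"
  shows "rank M \<ge> CARD('n) - 1"
proof -
  define Mf where "Mf = (\<lambda>i j. M$i$j)"
  have H: "hermitian_mat M" using assms(1) by (simp add: psd_mat_def)
  have Hf: "M$i$j = cnj (M$j$i)" for i j using H unfolding hermitian_mat_def by blast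
  have P: "psdr UNIV Mf"
    unfolding psdr_def
  proof (intro conjI allI)
    show "herm UNIV Mf" unfolding herm_def Mf_def using Hf by blast
    fix x :: "'n \<Rightarrow> complex"
    have q: "qf UNIV Mf x = (\<Sum>i\<in>UNIV. \<Sum>j\<in>UNIV. cnj ((vec_lambda x) $ i) * M $ i $ j * (vec_lambda x) $ j)"
      by (simp add: qf_def Mf_def)
    have Q: "\<forall>y :: complex^'n. 0 \<le> Re (\<Sum>i\<in>UNIV. \<Sum>j\<in>UNIV. cnj (y $ i) * M $ i $ j * y $ j)"
      using assms(1) unfolding psd_mat_def by blast
    show "0 \<le> Re (qf UNIV Mf x)" unfolding q by (rule spec[OF Q])
  qed
  have C: "conn UNIV Mf" unfolding Mf_def by (rule irr_conn[OF H assms(2)])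
  have A: "angc (pi / 2 ^ CARD('n)) UNIV Mf"
    unfolding angc_def good_def Mf_def using assms(3) by force
  have dep: "\<exists>a b. (a \<noteq> 0 \<or> b \<noteq> 0) \<and> (\<forall>i. a * v$i + b * w$i = 0)"
    if "M *v v = 0" "M *v w = 0" for v w
  proof -
    have "kerv UNIV Mf (\<lambda>i. v$i)" "kerv UNIV Mf (\<lambda>i. w$i)"
      using that kerv_vec unfolding Mf_def by blast+
    thus ?thesis using main_ind[of "CARD('n)", rule_format, of UNIV Mf "\<lambda>i. v$i" "\<lambda>i. w$i"] P C A by simp
  qed
  obtain k where K: "\<And>w. M *v w = 0 \<Longrightarrow> w$k = 0 \<Longrightarrow> w = 0"
  proof (cases "\<exists>z. M *v z = 0 \<and> z \<noteq> 0")
    case True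
    then obtain z where z: "M *v z = 0" "z \<noteq> 0" by blast
    then obtain k where zk: "z$k \<noteq> 0" by (metis vec_eq_iff zero_index)
    show ?thesis
    proof (rule that[of k])
      fix w assume w: "M *v w = 0" "w$k = 0"
      obtain a b where ab: "a \<noteq> 0 \<or> b \<noteq> 0" "\<forall>i. a * z$i + b * w$i = 0" using dep[OF z(1) w(1)] by blast
      have "a = 0" using ab(2) w(2) zk by (metis add.right_neutral mult_eq_0_iff mult_zero_right)
      hence "b \<noteq> 0" using ab(1) by simp
      thus "w = 0" using ab(2) \<open>a = 0\<close> by (simp add: vec_eq_iff)
    qed
  next
    case False
    thus ?thesis using that by blast
  qed
  have KEY: "\<forall>i. c i = 0" if c: "c k = 0" "(\<Sum>i\<in>UNIV. c i *s row i M) = 0" for c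
  proof -
    define w where "w = (\<chi> i. cnj (c i))"
    have "(M *v w)$j = 0" for j
    proof -
      have "(M *v w)$j = (\<Sum>i\<in>UNIV. M$j$i * cnj (c i))"
        by (simp add: matrix_vector_mult_def w_def)
      also have "\<dots> = cnj (\<Sum>i\<in>UNIV. c i * M$i$j)"
        by (simp add: Hf[of j] mult.commute)
      also have "(\<Sum>i\<in>UNIV. c i * M$i$j) = (\<Sum>i\<in>UNIV. c i *s row i M)$j"
        by (simp add: row_def)
      finally show ?thesis using c(2) by simp
    qed
    hence "M *v w = 0" by (simp add: vec_eq_iff)
    moreover have "w$k = 0" using c(1) by (simp add: w_def)
    ultimately have "w = 0" by (rule K)
    thus ?thesis by (simp add: w_def vec_eq_iff)
  qed
  define R where "R = (\<lambda>i. row i M) ` (UNIV - {k})"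
  have inj: "inj_on (\<lambda>i. row i M) (UNIV - {k})"
  proof (rule inj_onI, rule ccontr)
    fix i j assume i: "i \<in> UNIV - {k}" and j: "j \<in> UNIV - {k}" and e: "row i M = row j M" and ne: "i \<noteq> j"
    define c where "c l = (if l = i then 1 else if l = j then -1 else (0::complex))" for l
    have "(\<Sum>l\<in>UNIV. c l *s row l M) = (\<Sum>l\<in>UNIV. (if l = i then row i M else 0) + (if l = j then - row j M else 0))"
      by (rule sum.cong) (use ne in \<open>auto simp: c_def\<close>)
    also have "\<dots> = 0" using e by (simp add: sum.distrib)
    finally have "\<forall>l. c l = 0" using KEY[of c] i j ne by (simp add: c_def)
    hence "c i = 0" by blast
    thus False by (simp add: c_def)
  qed
  have ind: "vec.independent R"
    unfolding vec.independent_explicit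
  proof (intro conjI allI impI ballI)
    show "finite R" unfolding R_def by simp
    fix u v assume s: "(\<Sum>v\<in>R. u v *s v) = 0" and v: "v \<in> R"
    define c where "c i = (if i = k then 0 else u (row i M))" for i
    have "(\<Sum>i\<in>UNIV. c i *s row i M) = c k *s row k M + (\<Sum>i\<in>UNIV-{k}. c i *s row i M)"
      by (rule sum.remove) auto
    also have "\<dots> = (\<Sum>i\<in>UNIV-{k}. u (row i M) *s row i M)"
      by (simp add: c_def)
    also have "\<dots> = (\<Sum>v\<in>R. u v *s v)"
      unfolding R_def by (rule sum.reindex[OF inj, symmetric, unfolded comp_def])
    finally have "\<forall>i. c i = 0" using KEY[of c] s by (simp add: c_def)
    moreover obtain i where "i \<in> UNIV - {k}" "v = row i M" using v unfolding R_def by blast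
    ultimately show "u v = 0" by (metis c_def DiffD2 singletonI)
  qed
  have "card R = CARD('n) - 1" unfolding R_def
    by (simp add: card_image[OF inj] card_Diff_subset)
  moreover have sub: "R \<subseteq> rows M" unfolding R_def rows_def by auto
  have "card R \<le> vec.dim (rows M)" by (rule vec.independent_card_le_dim[OF sub ind])
  ultimately have "CARD('n) - 1 \<le> vec.dim (rows M)" by simp
  thus ?thesis by (simp add: row_rank_def_gen)
qed


end
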